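(* Let $\chi>0$, $\phi\in C^1(\mathbb{R})$ with $\phi'>0$, $\phi(0)>0$, $s>\chi\phi(0)$, $u_-\ge0$, and let $g\in C^1([0,\infty))$ be positive with exactly one $\beta>0$ such that $g'<0$ on $[0,\beta)$ and $g'>0$ on $(\beta,\infty)$; let $g_\infty:=\lim_{V\to\infty}g(V)\in(0,\infty]$. Consider equilibria $(V,0)$, $V\ge0$, of $V'=W$, $W'=-h(W)+g(V)$, $h(W)=\frac{u_-(\chi\phi(0)-s)}{\chi\phi(W)-s}$. (1) If $g_\infty<g(0)$: (i) if $u_-<g(\beta)$ or $u_->g(0)$ there is no equilibrium; (ii) if $u_-=g(\beta)$ or $g_\infty<u_-<g(0)$ there is exactly one equilibrium $E=(v,0)$, with $v\le\beta$, and $E$ is a stable focus, a stable node, or non-hyperbolic; (iii) if $g(\beta)<u_-<g_\infty$ there are exactly two equilibria $E_\pm=(v_\pm,0)$ with $0<v_+<\beta<v_-$, $u_-=g(v_\pm)$, $E_-$ a saddle and $E_+$ a stable focus or stable node. (2) If $g_\infty>g(0)$ (including $g_\infty=+\infty$): (i) if $u_-<g(\beta)$ or $u_-\ge g_\infty$ there is no equilibrium; (ii) if $u_-=g(\beta)$ or $g(0)<u_-<g_\infty$ there is exactly one equilibrium $E=(v,0)$, with $v\ge\beta$, and $E$ is a saddle or non-hyperbolic; (iii) if $g(\beta)<u_-\le g(0)$ there are exactly two equilibria $E_\pm=(v_\pm,0)$ with $0\le v_+<\beta<v_-$, $u_-=g(v_\pm)$, $E_-$ a saddle and $E_+$ a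 stable focus or stable node. (3) If $g_\infty=g(0)$: (i) if $u_-<g(\beta)$ or $u_->g(0)$ there is no equilibrium; (ii) if $u_-=g(\beta)$ there is exactly one equilibrium $E=(\beta,0)$, and it is non-hyperbolic; (iii) if $g(\beta)<u_-<g(0)$ there are exactly two equilibria $E_\pm=(v_\pm,0)$ with $0<v_+<\beta<v_-$, $u_-=g(v_\pm)$, $E_-$ a saddle and $E_+$ a stable focus or stable node. *)

theory Defs
  imports Complex_Main "HOL-Library.Extended_Real"
begin

definition hfun :: "real \<Rightarrow> real \<Rightarrow> (real \<Rightarrow> real) \<Rightarrow> real \<Rightarrow> real \<Rightarrow> real" where
  "hfun um chi phi s W = um * (chi * phi 0 - s) / (chi * phi W - s)"

definition F1 :: "real \<Rightarrow> real \<Rightarrow> real" where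
  "F1 V W = W"

definition F2 :: "(real \<Rightarrow> real) \<Rightarrow> real \<Rightarrow> real \<Rightarrow> (real \<Rightarrow> real) \<Rightarrow> real \<Rightarrow> real \<Rightarrow> real \<Rightarrow> real" where
  "F2 g um chi phi s V W = - hfun um chi phi s W + g V"

definition equilibria :: "(real \<Rightarrow> real \<Rightarrow> real) \<Rightarrow> (real \<Rightarrow> real \<Rightarrow> real) \<Rightarrow> (real \<times> real) set" where
  "equilibria P Q = {(V, W). V \<ge> 0 \<and> P V W = 0 \<and> Q V W = 0}"

text \<open>Jacobian matrix ((a,b),(c,d)) of (P,Q) at (v,w); derivatives in V are taken
  within the phase region V >= 0 (one-sided at V = 0).\<close>
definition has_jacobian_at ::
  "(real \<Rightarrow> real \<Rightarrow> real) \<Rightarrow> (real \<Rightarrow> real \<Rightarrow> real) \<Rightarrow> real \<Rightarrow> real \<Rightarrow> real \<times> real \<times> real \<times> real \<Rightarrow> bool" where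
  "has_jacobian_at P Q v w J \<longleftrightarrow>
     (case J of (a, b, c, d) \<Rightarrow>
        ((\<lambda>x. P x w) has_real_derivative a) (at v within {0..}) \<and>
        ((\<lambda>y. P v y) has_real_derivative b) (at w) \<and>
        ((\<lambda>x. Q x w) has_real_derivative c) (at v within {0..}) \<and>
        ((\<lambda>y. Q v y) has_real_derivative d) (at w))"

definition eigs2 :: "real \<times> real \<times> real \<times> real \<Rightarrow> complex set" where
  "eigs2 J = (case J of (a, b, c, d) \<Rightarrow>
     {z. (z - complex_of_real a) * (z - complex_of_real d) - complex_of_real b * complex_of_real c = 0})"

definition saddle_mat :: "real \<times> real \<times> real \<times> real \<Rightarrow> bool" where
  "saddle_mat J \<longleftrightarrow> (\<exists>l1\<in>eigs2 J. \<exists>l2\<in>eigs2 J. Im l1 = 0 \<and> Im l2 = 0 \<and> Re l1 < 0 \<and> 0 < Re l2)"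

definition stable_node_mat :: "real \<times> real \<times> real \<times> real \<Rightarrow> bool" where
  "stable_node_mat J \<longleftrightarrow> (\<forall>l\<in>eigs2 J. Im l = 0 \<and> Re l < 0)"

definition stable_focus_mat :: "real \<times> real \<times> real \<times> real \<Rightarrow> bool" where
  "stable_focus_mat J \<longleftrightarrow> (\<forall>l\<in>eigs2 J. Im l \<noteq> 0 \<and> Re l < 0)"

definition nonhyperbolic_mat :: "real \<times> real \<times> real \<times> real \<Rightarrow> bool" where
  "nonhyperbolic_mat J \<longleftrightarrow> (\<exists>l\<in>eigs2 J. Re l = 0)"

definition eq_kind ::
  "(real \<times> real \<times> real \<times> real \<Rightarrow> bool) \<Rightarrow> (real \<Rightarrow> real \<Rightarrow> real) \<Rightarrow> (real \<Rightarrow> real \<Rightarrow> real) \<Rightarrow> real \<times> real \<Rightarrow> bool" where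
  "eq_kind K P Q p \<longleftrightarrow> (\<exists>J. has_jacobian_at P Q (fst p) (snd p) J \<and> K J)"

end

theory Submission
  imports Defs
begin


lemma cplx_poly_parts:
  assumes "z * (z - complex_of_real d) - complex_of_real c = 0"
  shows "(Re z)^2 - (Im z)^2 - d * Re z - c = 0" "2 * Re z * Im z - d * Im z = 0"
proof -
  have "Re (z * (z - complex_of_real d) - complex_of_real c) = 0" using assms by simp
  thus "(Re z)^2 - (Im z)^2 - d * Re z - c = 0" by (simp add: power2_eq_square algebra_simps)
  have "Im (z * (z - complex_of_real d) - complex_of_real c) = 0" using assms by simp
  thus "2 * Re z * Im z - d * Im z = 0" by (simp add: algebra_simps)
qed

lemma saddle_lem:
  assumes "c > 0" shows "saddle_mat (0, 1, c, d)"
proof -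
  define S where "S = sqrt (d^2 + 4*c)"
  have S2: "S^2 = d^2 + 4*c" unfolding S_def using assms
    by (simp add: add_nonneg_pos less_imp_le)
  have "sqrt (d^2) < S" unfolding S_def using assms by (intro real_sqrt_less_mono) simp
  hence Sd: "\<bar>d\<bar> < S" by simp
  have e: "\<And>r. r*(r-d) - c = 0 \<Longrightarrow> complex_of_real r \<in> eigs2 (0,1,c,d)"
  proof -
    fix r :: real assume h: "r*(r-d) - c = 0"
    have "complex_of_real r * (complex_of_real r - complex_of_real d) - complex_of_real c
        = complex_of_real (r*(r-d) - c)" by simp
    thus "complex_of_real r \<in> eigs2 (0,1,c,d)" using h by (simp add: eigs2_def)
  qed
  have r1: "((d-S)/2)*((d-S)/2-d) - c = 0"
  proof -
    have "((d-S)/2)*((d-S)/2-d) = (S^2 - d^2)/4" by (simp add: field_simps power2_eq_square)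
    thus ?thesis using S2 by simp
  qed
  have r2: "((d+S)/2)*((d+S)/2-d) - c = 0"
  proof -
    have "((d+S)/2)*((d+S)/2-d) = (S^2 - d^2)/4" by (simp add: field_simps power2_eq_square)
    thus ?thesis using S2 by simp
  qed
  show ?thesis unfolding saddle_mat_def
    apply (rule bexI[OF _ e[OF r1]])
    apply (rule bexI[OF _ e[OF r2]])
    using Sd by auto
qed

lemma nonhyp_lem: "nonhyperbolic_mat (0, 1, 0, d)"
  unfolding nonhyperbolic_mat_def eigs2_def by (rule bexI[of _ 0]) auto

lemma stable_lem:
  assumes "c < 0" "d < 0"
  shows "stable_focus_mat (0, 1, c, d) \<or> stable_node_mat (0, 1, c, d)"
proof (cases "d^2 + 4*c \<ge> 0")
  case True
  have "stable_node_mat (0,1,c,d)" unfolding stable_node_mat_def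
  proof
    fix l assume "l \<in> eigs2 (0,1,c,d)"
    hence h: "l * (l - complex_of_real d) - complex_of_real c = 0" by (simp add: eigs2_def)
    note p = cplx_poly_parts[OF h]
    have im: "Im l = 0"
    proof (rule ccontr)
      assume n: "Im l \<noteq> 0"
      hence "2 * Re l = d" using p(2) by (metis mult.commute mult_cancel_left left_diff_distrib eq_iff_diff_eq_0)
      hence "(Im l)^2 = - (d^2 + 4*c)/4" using p(1) by (auto simp: field_simps power2_eq_square)
      moreover have "(Im l)^2 > 0" using n by simp
      ultimately show False using True by simp
    qed
    moreover have "Re l < 0"
    proof (rule ccontr)
      assume "\<not> Re l < 0"
      hence "Re l \<ge> 0" by simp
      hence "(Re l)^2 - d * Re l - c > 0" using assms
        by (smt (verit) mult_nonpos_nonneg zero_le_power2)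
      thus False using p(1) im by simp
    qed
    ultimately show "Im l = 0 \<and> Re l < 0" by simp
  qed
  thus ?thesis by simp
next
  case False
  have "stable_focus_mat (0,1,c,d)" unfolding stable_focus_mat_def
  proof
    fix l assume "l \<in> eigs2 (0,1,c,d)"
    hence h: "l * (l - complex_of_real d) - complex_of_real c = 0" by (simp add: eigs2_def)
    note p = cplx_poly_parts[OF h]
    have im: "Im l \<noteq> 0"
    proof
      assume "Im l = 0"
      hence "(Re l)^2 - d * Re l - c = 0" using p(1) by simp
      hence "(2 * Re l - d)^2 = d^2 + 4*c" by (simp add: power2_eq_square algebra_simps)
      moreover have "(2 * Re l - d)^2 \<ge> 0" by simp
      ultimately show False using False by simp
    qed
    hence "2 * Re l = d" using p(2) by (metis mult.commute mult_cancel_left left_diff_distrib eq_iff_diff_eq_0)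
    thus "Im l \<noteq> 0 \<and> Re l < 0" using im assms by simp
  qed
  thus ?thesis by simp
qed



theorem proposition2p6:
  fixes chi s um beta :: real and phi phi' g g' :: "real \<Rightarrow> real" and ginf :: ereal
  assumes chi_pos: "chi > 0"
    and phi_deriv: "\<And>x. (phi has_real_derivative phi' x) (at x)"
    and phi'_cont: "continuous_on UNIV phi'"
    and phi'_pos: "\<And>x. phi' x > 0"
    and phi0_pos: "phi 0 > 0"
    and s_gt: "s > chi * phi 0"
    and um_nonneg: "um \<ge> 0"
    and g_deriv: "\<And>v. v \<ge> 0 \<Longrightarrow> (g has_real_derivative g' v) (at v within {0..})"
    and g'_cont: "continuous_on {0..} g'"
    and g_pos: "\<And>v. v \<ge> 0 \<Longrightarrow> g v > 0"
    and beta_pos: "beta > 0"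
    and g'_neg: "\<And>v. 0 \<le> v \<Longrightarrow> v < beta \<Longrightarrow> g' v < 0"
    and g'_pos: "\<And>v. v > beta \<Longrightarrow> g' v > 0"
    and ginf_def: "ginf = Lim at_top (\<lambda>V. ereal (g V))"
  shows
   "let P = F1; Q = F2 g um chi phi s; E = equilibria P Q;
        saddle = eq_kind saddle_mat P Q; node = eq_kind stable_node_mat P Q;
        focus = eq_kind stable_focus_mat P Q; nonhyp = eq_kind nonhyperbolic_mat P Q
    in
    (ginf < ereal (g 0) \<longrightarrow>
       ((um < g beta \<or> um > g 0) \<longrightarrow> E = {}) \<and>
       ((um = g beta \<or> (ginf < ereal um \<and> um < g 0)) \<longrightarrow>
          (\<exists>v. E = {(v, 0)} \<and> v \<le> beta \<and> (focus (v, 0) \<or> node (v, 0) \<or> nonhyp (v, 0)))) \<and>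
       ((g beta < um \<and> ereal um < ginf) \<longrightarrow>
          (\<exists>vp vm. E = {(vp, 0), (vm, 0)} \<and> 0 < vp \<and> vp < beta \<and> beta < vm \<and>
             um = g vp \<and> um = g vm \<and> saddle (vm, 0) \<and> (focus (vp, 0) \<or> node (vp, 0))))) \<and>
    (ginf > ereal (g 0) \<longrightarrow>
       ((um < g beta \<or> ereal um \<ge> ginf) \<longrightarrow> E = {}) \<and>
       ((um = g beta \<or> (g 0 < um \<and> ereal um < ginf)) \<longrightarrow>
          (\<exists>v. E = {(v, 0)} \<and> v \<ge> beta \<and> (saddle (v, 0) \<or> nonhyp (v, 0)))) \<and>
       ((g beta < um \<and> um \<le> g 0) \<longrightarrow>
          (\<exists>vp vm. E = {(vp, 0), (vm, 0)} \<and> 0 \<le> vp \<and> vp < beta \<and> beta < vm \<and>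
             um = g vp \<and> um = g vm \<and> saddle (vm, 0) \<and> (focus (vp, 0) \<or> node (vp, 0))))) \<and>
    (ginf = ereal (g 0) \<longrightarrow>
       ((um < g beta \<or> um > g 0) \<longrightarrow> E = {}) \<and>
       (um = g beta \<longrightarrow> E = {(beta, 0)} \<and> nonhyp (beta, 0)) \<and>
       ((g beta < um \<and> um < g 0) \<longrightarrow>
          (\<exists>vp vm. E = {(vp, 0), (vm, 0)} \<and> 0 < vp \<and> vp < beta \<and> beta < vm \<and>
             um = g vp \<and> um = g vm \<and> saddle (vm, 0) \<and> (focus (vp, 0) \<or> node (vp, 0)))))"
proof -
  have D0: "chi * phi 0 - s \<noteq> 0" using s_gt by simp
  define dd where "dd = um * chi * phi' 0 / (chi * phi 0 - s)"
  have F2eq: "F2 g um chi phi s v 0 = g v - um" for v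
    unfolding F2_def hfun_def using D0 by simp
  define S where "S = {v. v \<ge> 0 \<and> g v = um}"
  have E: "equilibria F1 (F2 g um chi phi s) = (\<lambda>v. (v, 0)) ` S"
    unfolding equilibria_def S_def F1_def using F2eq by force
  have jac: "has_jacobian_at F1 (F2 g um chi phi s) v 0 (0, 1, g' v, dd)" if "v \<ge> 0" for v
    unfolding has_jacobian_at_def F1_def
    apply (simp only: prod.case)
  proof (intro conjI)
    show "((\<lambda>x. 0) has_real_derivative 0) (at v within {0..})" by simp
    show "((\<lambda>W. W) has_real_derivative 1) (at 0)" by simp
    show "((\<lambda>x. F2 g um chi phi s x 0) has_real_derivative g' v) (at v within {0..})"
      unfolding F2eq using g_deriv[OF that] by (auto intro!: derivative_eq_intros)
    have "((\<lambda>y. - (um * (chi * phi 0 - s) / (chi * phi y - s)) + g v) has_real_derivative dd) (at 0)"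
      unfolding dd_def using D0
      apply (auto intro!: derivative_eq_intros phi_deriv)
      done
    thus "(F2 g um chi phi s v has_real_derivative dd) (at 0)"
      unfolding F2_def hfun_def .
  qed
  have dd_neg: "dd < 0" if "um > 0"
    unfolding dd_def using that chi_pos phi'_pos[of 0] s_gt
    by (intro divide_pos_neg mult_pos_pos) auto
  have gcont: "continuous_on {0..} g"
    unfolding continuous_on_eq_continuous_within
    using g_deriv DERIV_continuous by blast
  have gderiv_at: "(g has_real_derivative g' v) (at v)" if "v > 0" for v
  proof -
    have "(g has_real_derivative g' v) (at v within {0<..})"
    proof (rule DERIV_subset[of g "g' v" v "{0..}"])
      show "(g has_real_derivative g' v) (at v within {0..})" using g_deriv[of v] that by simp
      show "{0<..} \<subseteq> {0::real..}" by auto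
    qed
    moreover have "at v within {0<..} = at v" using that by (intro at_within_open) auto
    ultimately show ?thesis by simp
  qed
  have dec: "g y < g x" if "0 \<le> x" "x < y" "y \<le> beta" for x y
  proof (rule DERIV_neg_imp_decreasing_open[of x y g])
    show "x < y" by fact
    show "continuous_on {x..y} g" using that by (intro continuous_on_subset[OF gcont]) auto
    fix z assume "x < z" "z < y"
    thus "\<exists>l. (g has_real_derivative l) (at z) \<and> l < 0"
    proof -
      have "z < beta" "z > 0" using \<open>x < z\<close> \<open>z < y\<close> that by auto
      thus ?thesis using gderiv_at g'_neg by (meson less_imp_le)
    qed
  qed
  have inc: "g x < g y" if "beta \<le> x" "x < y" for x y
  proof (rule DERIV_pos_imp_increasing_open[of x y g])
    show "x < y" by fact
    show "continuous_on {x..y} g" using that beta_pos by (intro continuous_on_subset[OF gcont]) auto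
    fix z assume "x < z" "z < y"
    thus "\<exists>l. (g has_real_derivative l) (at z) \<and> 0 < l"
    proof -
      have "z > beta" "z > 0" using \<open>x < z\<close> that beta_pos by auto
      thus ?thesis using gderiv_at g'_pos by blast
    qed
  qed
  have g'beta: "g' beta = 0"
  proof -
    have "continuous_on {0<..} g'" by (rule continuous_on_subset[OF g'_cont]) auto
    hence ic: "isCont g' beta" using beta_pos
      by (simp add: continuous_on_eq_continuous_at)
    have "(g' \<longlongrightarrow> g' beta) (at_left beta)"
      using ic by (simp add: isCont_def filterlim_at_split)
    moreover have "eventually (\<lambda>x. g' x \<le> 0) (at_left beta)"
      using eventually_at_left_real[OF beta_pos]
      by eventually_elim (auto intro: less_imp_le g'_neg)
    ultimately have "g' beta \<le> 0"
      by (intro tendsto_upperbound) auto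
    moreover have "(g' \<longlongrightarrow> g' beta) (at_right beta)"
      using ic by (simp add: isCont_def filterlim_at_split)
    moreover have "eventually (\<lambda>x. g' x \<ge> 0) (at_right beta)"
      using eventually_at_right_less[of beta]
      by eventually_elim (auto intro: less_imp_le g'_pos)
    ultimately show ?thesis
      by (metis order.antisym tendsto_lowerbound trivial_limit_at_right_real)
  qed
  define L where "L = (SUP x\<in>{beta..}. ereal (g x))"
  have lim: "((\<lambda>V. ereal (g V)) \<longlongrightarrow> L) at_top"
  proof (rule order_tendstoI)
    fix a assume "a < L"
    then obtain x where x: "x \<ge> beta" "a < ereal (g x)" unfolding L_def less_SUP_iff by auto
    show "eventually (\<lambda>V. a < ereal (g V)) at_top"
      using eventually_ge_at_top[of x]
    proof eventually_elim
      case (elim V)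
      hence "g x \<le> g V" using inc[of x V] x by (cases "x = V") auto
      thus ?case using x by (meson ereal_less_eq(3) order_less_le_trans)
    qed
  next
    fix b assume "L < b"
    show "eventually (\<lambda>V. ereal (g V) < b) at_top"
      using eventually_ge_at_top[of beta]
    proof eventually_elim
      case (elim V)
      hence "ereal (g V) \<le> L" unfolding L_def by (auto intro: SUP_upper)
      thus ?case using \<open>L < b\<close> by simp
    qed
  qed
  have ginfL: "ginf = L" unfolding ginf_def using lim by (rule tendsto_Lim[rotated]) simp
  have above: "ereal (g V) < ginf" if "V \<ge> beta" for V
  proof -
    have "ereal (g (V+1)) \<le> ginf" unfolding ginfL L_def using that by (auto intro: SUP_upper)
    moreover have "ereal (g V) < ereal (g (V+1))" using inc that by simp
    ultimately show ?thesis by (rule order_less_le_trans[rotated])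
  qed
  have reach: "\<exists>V\<ge>beta. um < g V" if "ereal um < ginf"
  proof -
    have "eventually (\<lambda>V. ereal um < ereal (g V)) at_top"
      using order_tendstoD(1)[OF lim, of "ereal um"] that ginfL by blast
    moreover have "eventually (\<lambda>V. V \<ge> beta) at_top" by (rule eventually_ge_at_top)
    ultimately have "eventually (\<lambda>V. V \<ge> beta \<and> um < g V) at_top"
      by eventually_elim simp
    then obtain N where "\<And>V. V \<ge> N \<Longrightarrow> V \<ge> beta \<and> um < g V"
      unfolding eventually_at_top_linorder by blast
    thus ?thesis by (meson order_refl)
  qed
  have gle: "g v \<le> g x" if "0 \<le> x" "x \<le> v" "v \<le> beta" for x v
    using dec[of x v] that by (cases "x = v") auto
  have gle2: "g x \<le> g v" if "beta \<le> x" "x \<le> v" for x v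
    using inc[of x v] that by (cases "x = v") auto
  have gmin: "g beta \<le> g v" if "0 \<le> v" for v
    using gle[of v beta] gle2[of beta v] that by (cases "v \<le> beta") auto
  have uL: "v = w" if "0 \<le> v" "v \<le> beta" "0 \<le> w" "w \<le> beta" "g v = g w" for v w
    using dec[of v w] dec[of w v] that by (cases v w rule: linorder_cases) auto
  have uR: "v = w" if "beta \<le> v" "beta \<le> w" "g v = g w" for v w
    using inc[of v w] inc[of w v] that by (cases v w rule: linorder_cases) auto
  have solL: "\<exists>v. 0 \<le> v \<and> v \<le> beta \<and> g v = um" if "g beta \<le> um" "um \<le> g 0"
    using that beta_pos by (intro IVT2' continuous_on_subset[OF gcont]) auto
  have solR: "\<exists>v. beta \<le> v \<and> g v = um" if h1: "g beta \<le> um" and h2: "ereal um < ginf"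
  proof -
    obtain V where V: "V \<ge> beta" "um < g V" using reach[OF h2] by auto
    have "\<exists>v. beta \<le> v \<and> v \<le> V \<and> g v = um"
      using h1 V beta_pos by (intro IVT' continuous_on_subset[OF gcont]) auto
    thus ?thesis by auto
  qed
  have Sdef: "v \<in> S \<longleftrightarrow> 0 \<le> v \<and> g v = um" for v unfolding S_def by simp
  have S_two: "S = {vp, vm}" if t: "0 \<le> vp" "vp \<le> beta" "beta \<le> vm" "g vp = um" "g vm = um" for vp vm
  proof (rule set_eqI)
    fix w
    have "w = vp \<or> w = vm" if w: "0 \<le> w" "g w = um"
    proof (cases "w \<le> beta")
      case True
      have "g w = g vp" using w t by simp
      thus ?thesis using uL[of w vp] True w t by blast
    next
      case False
      have "g w = g vm" using w t by simp
      thus ?thesis using uR[of w vm] False w t by simp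
    qed
    moreover have "0 \<le> vm" using t beta_pos by simp
    ultimately show "w \<in> S \<longleftrightarrow> w \<in> {vp, vm}" unfolding Sdef using t by blast
  qed
  have S_oneL: "S = {v}" if t: "0 \<le> v" "v \<le> beta" "g v = um" "\<And>w. w > beta \<Longrightarrow> g w \<noteq> um" for v
  proof (rule set_eqI)
    fix w
    have "w = v" if w: "0 \<le> w" "g w = um"
    proof (cases "w \<le> beta")
      case True
      have "g w = g v" using w t by simp
      thus ?thesis using uL[of w v] True w t by blast
    next
      case False
      thus ?thesis using t(4)[of w] w by simp
    qed
    thus "w \<in> S \<longleftrightarrow> w \<in> {v}" unfolding Sdef using t by blast
  qed
  have S_oneR: "S = {v}" if t: "beta \<le> v" "g v = um" "\<And>w. 0 \<le> w \<Longrightarrow> w < beta \<Longrightarrow> g w \<noteq> um" for v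
  proof (rule set_eqI)
    fix w
    have "w = v" if w: "0 \<le> w" "g w = um"
    proof (cases "w < beta")
      case False
      have "g w = g v" using w t by simp
      thus ?thesis using uR[of w v] False w t by simp
    next
      case True
      thus ?thesis using t(3)[of w] w by simp
    qed
    moreover have "0 \<le> v" using t beta_pos by simp
    ultimately show "w \<in> S \<longleftrightarrow> w \<in> {v}" unfolding Sdef using t by blast
  qed
  have ESimg1: "(\<lambda>v. (v, 0::real)) ` {a} = {(a, 0)}" for a :: real by simp
  have ESimg2: "(\<lambda>v. (v, 0::real)) ` {a, b} = {(a, 0), (b, 0)}" for a b :: real by simp
  have k_pos: "eq_kind saddle_mat F1 (F2 g um chi phi s) (v, 0)" if "v \<ge> 0" "g' v > 0" for v
    unfolding eq_kind_def fst_conv snd_conv using jac[OF that(1)] saddle_lem[OF that(2)] by blast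
  have k_neg: "eq_kind stable_focus_mat F1 (F2 g um chi phi s) (v, 0) \<or> eq_kind stable_node_mat F1 (F2 g um chi phi s) (v, 0)"
    if "v \<ge> 0" "g' v < 0" "um > 0" for v
    unfolding eq_kind_def fst_conv snd_conv using jac[OF that(1)] stable_lem[OF that(2) dd_neg[OF that(3)]] by blast
  have k_beta: "eq_kind nonhyperbolic_mat F1 (F2 g um chi phi s) (beta, 0)"
  proof -
    have "has_jacobian_at F1 (F2 g um chi phi s) beta 0 (0, 1, 0, dd)" using jac[of beta] beta_pos g'beta by simp
    thus ?thesis unfolding eq_kind_def fst_conv snd_conv using nonhyp_lem[of dd] by blast
  qed
  have gb_ginf: "ereal (g beta) < ginf" using above by simp
  have Sbeta: "S = {beta}" if "um = g beta"
    using that beta_pos inc[of beta] by (intro S_oneL) force+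
  have ump: "um > 0" if "0 \<le> v" "g v = um" for v using g_pos that by auto
  have g0b: "g beta \<le> g 0" using gle[of 0 beta] beta_pos by simp
  have Ssol: "0 \<le> v \<and> g v = um" if "v \<in> S" for v using that Sdef by blast
  show ?thesis unfolding Let_def E
    apply (intro conjI impI)
    subgoal premises p
    proof -
      have "S = {}"
      proof (rule ccontr)
        assume "S \<noteq> {}" then obtain v where v: "0 \<le> v" "g v = um" unfolding S_def by auto
        have "g v \<le> g 0"
        proof (cases "v \<le> beta")
          case True thus ?thesis using gle[of 0 v] v by simp
        next
          case False
          hence "ereal (g v) < ginf" using above by simp
          hence "ereal (g v) < ereal (g 0)" using p(1) by (rule order.strict_trans)
          thus ?thesis by simp
        qed
        thus False using p(2) v gmin[OF v(1)] by linarith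
      qed
      thus ?thesis by simp
    qed
    subgoal premises p
    proof (cases "um = g beta")
      case True
      thus ?thesis using Sbeta k_beta by auto
    next
      case False
      hence u: "ginf < ereal um" "um < g 0" using p by auto
      have "ereal (g beta) < ereal um" using gb_ginf u(1) by (rule order.strict_trans)
      hence gbu: "g beta < um" by simp
      obtain v where v: "0 \<le> v" "v \<le> beta" "g v = um" using solL[of] gbu u by force
      have vb: "v < beta" using v gbu by (cases "v = beta") auto
      have "S = {v}"
      proof (rule S_oneL[OF v])
        fix w :: real assume "w > beta"
        hence "ereal (g w) < ginf" using above by simp
        hence "ereal (g w) < ereal um" using u(1) by (rule order.strict_trans)
        thus "g w \<noteq> um" by auto
      qed
      thus ?thesis using k_neg[OF v(1) g'_neg[OF v(1) vb] ump[OF v(1) v(3)]] v(2) by auto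
    qed
    subgoal premises p
    proof -
      have gbu: "g beta < um" and uinf: "ereal um < ginf" using p by auto
      have "ereal um < ereal (g 0)" using uinf p(1) by (rule order.strict_trans)
      hence u0: "um < g 0" by simp
      obtain vp where vp: "0 \<le> vp" "vp \<le> beta" "g vp = um" using solL gbu u0 by force
      obtain vm where vm: "beta \<le> vm" "g vm = um" using solR gbu uinf by force
      have vpb: "vp < beta" using vp gbu by (cases "vp = beta") auto
      have vp0: "0 < vp" using vp u0 by (cases "vp = 0") auto
      have vmb: "beta < vm" using vm gbu by (cases "vm = beta") auto
      have vm0: "0 \<le> vm" using vmb beta_pos by simp
      show ?thesis
        apply (rule exI[of _ vp], rule exI[of _ vm])
        using S_two[OF vp(1,2) vm(1) vp(3) vm(2)] vp vm vpb vp0 vmb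
          k_pos[OF vm0 g'_pos[OF vmb]] k_neg[OF vp(1) g'_neg[OF vp(1) vpb] ump[OF vp(1) vp(3)]]
        by auto
    qed
    subgoal premises p
    proof -
      have "S = {}"
      proof (rule ccontr)
        assume "S \<noteq> {}" then obtain v where v: "0 \<le> v" "g v = um" unfolding S_def by auto
        have gv: "ereal (g v) < ginf"
        proof (cases "v \<le> beta")
          case True
          hence "ereal (g v) \<le> ereal (g 0)" using gle[of 0 v] v by simp
          thus ?thesis using p(1) by (rule order.strict_trans1)
        next
          case False
          thus ?thesis using above by simp
        qed
        show False
        proof (cases "um < g beta")
          case True thus False using v gmin[OF v(1)] by linarith
        next
          case False
          hence "ginf \<le> ereal um" using p(2) by blast
          thus False using gv v by simp
        qed
      qed
      thus ?thesis by simp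
    qed
    subgoal premises p
    proof (cases "um = g beta")
      case True
      thus ?thesis using Sbeta k_beta by auto
    next
      case False
      hence u: "g 0 < um" "ereal um < ginf" using p by auto
      have gbu: "g beta < um" using u g0b by simp
      obtain v where v: "beta \<le> v" "g v = um" using solR gbu u by force
      have vb: "beta < v" using v gbu by (cases "v = beta") auto
      have v0: "0 \<le> v" using vb beta_pos by simp
      have "S = {v}"
      proof (rule S_oneR[OF v])
        fix w :: real assume "0 \<le> w" "w < beta"
        hence "g w \<le> g 0" using gle[of 0 w] by simp
        thus "g w \<noteq> um" using u by auto
      qed
      thus ?thesis using k_pos[OF v0 g'_pos[OF vb]] v(1) by auto
    qed
    subgoal premises p
    proof -
      have gbu: "g beta < um" and u0: "um \<le> g 0" using p by auto
      have "ereal um \<le> ereal (g 0)" using u0 by simp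
      hence uinf: "ereal um < ginf" using p(1) by (rule order.strict_trans1)
      obtain vp where vp: "0 \<le> vp" "vp \<le> beta" "g vp = um" using solL gbu u0 by force
      obtain vm where vm: "beta \<le> vm" "g vm = um" using solR gbu uinf by force
      have vpb: "vp < beta" using vp gbu by (cases "vp = beta") auto
      have vmb: "beta < vm" using vm gbu by (cases "vm = beta") auto
      have vm0: "0 \<le> vm" using vmb beta_pos by simp
      show ?thesis
        apply (rule exI[of _ vp], rule exI[of _ vm])
        using S_two[OF vp(1,2) vm(1) vp(3) vm(2)] vp vm vpb vmb
          k_pos[OF vm0 g'_pos[OF vmb]] k_neg[OF vp(1) g'_neg[OF vp(1) vpb] ump[OF vp(1) vp(3)]]
        by auto
    qed
    subgoal premises p
    proof -
      have "S = {}"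
      proof (rule ccontr)
        assume "S \<noteq> {}" then obtain v where v: "0 \<le> v" "g v = um" unfolding S_def by auto
        have "g v \<le> g 0"
        proof (cases "v \<le> beta")
          case True thus ?thesis using gle[of 0 v] v by simp
        next
          case False
          hence "ereal (g v) < ginf" using above by simp
          thus ?thesis using p(1) by simp
        qed
        thus False using p(2) v gmin[OF v(1)] by linarith
      qed
      thus ?thesis by simp
    qed
    subgoal using Sbeta by simp
    subgoal using k_beta .
    subgoal premises p
    proof -
      have gbu: "g beta < um" and u0: "um < g 0" using p by auto
      have uinf: "ereal um < ginf" using p(1) u0 by simp
      obtain vp where vp: "0 \<le> vp" "vp \<le> beta" "g vp = um" using solL gbu u0 by force
      obtain vm where vm: "beta \<le> vm" "g vm = um" using solR gbu uinf by force
      have vpb: "vp < beta" using vp gbu by (cases "vp = beta") auto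
      have vp0: "0 < vp" using vp u0 by (cases "vp = 0") auto
      have vmb: "beta < vm" using vm gbu by (cases "vm = beta") auto
      have vm0: "0 \<le> vm" using vmb beta_pos by simp
      show ?thesis
        apply (rule exI[of _ vp], rule exI[of _ vm])
        using S_two[OF vp(1,2) vm(1) vp(3) vm(2)] vp vm vpb vp0 vmb
          k_pos[OF vm0 g'_pos[OF vmb]] k_neg[OF vp(1) g'_neg[OF vp(1) vpb] ump[OF vp(1) vp(3)]]
        by auto
    qed
    done
qed
end
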